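(* Let $k\ge 2$ be an integer. Every graph $G$ with $\tau(G)\ge k$ that is $(P_2\cup kP_1)$-free is hamiltonian-connected.
   Context: All graphs are finite and simple. For a graph $H$, a graph $G$ is $H$-free if $G$ contains no induced subgraph isomorphic to $H$; $P_2\cup kP_1$ is the disjoint union of an edge and $k$ isolated vertices. For a graph $G$, $c(G)$ is the number of components of $G$. The toughness of $G$ is $\tau(G)=\min\{|S|/c(G-S): S\subseteq V(G),\ c(G-S)\ge 2\}$ if $G$ is not complete, and $\tau(G)=\infty$ if $G$ is complete. A graph is hamiltonian-connected if for every two distinct vertices $a,b$ there is a path from $a$ to $b$ containing all vertices of the graph. *)

theory Defs
  imports Main "HOL-Library.Extended_Real"
begin

definition graph :: "'a set \<Rightarrow> ('a \<Rightarrow> 'a \<Rightarrow> bool) \<Rightarrow> bool" where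
  "graph V E \<longleftrightarrow> finite V \<and> (\<forall>x y. E x y \<longrightarrow> x \<in> V \<and> y \<in> V)
     \<and> (\<forall>x y. E x y \<longrightarrow> E y x) \<and> (\<forall>x. \<not> E x x)"

definition complete_graph :: "'a set \<Rightarrow> ('a \<Rightarrow> 'a \<Rightarrow> bool) \<Rightarrow> bool" where
  "complete_graph V E \<longleftrightarrow> (\<forall>x\<in>V. \<forall>y\<in>V. x \<noteq> y \<longrightarrow> E x y)"

definition restr :: "('a \<Rightarrow> 'a \<Rightarrow> bool) \<Rightarrow> 'a set \<Rightarrow> 'a \<Rightarrow> 'a \<Rightarrow> bool" where
  "restr E W = (\<lambda>x y. x \<in> W \<and> y \<in> W \<and> E x y)"

definition components :: "'a set \<Rightarrow> ('a \<Rightarrow> 'a \<Rightarrow> bool) \<Rightarrow> 'a set set" where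
  "components W E = {{y \<in> W. (restr E W)\<^sup>*\<^sup>* x y} | x. x \<in> W}"

definition num_components :: "'a set \<Rightarrow> ('a \<Rightarrow> 'a \<Rightarrow> bool) \<Rightarrow> 'a set \<Rightarrow> nat" where
  "num_components V E S = card (components (V - S) E)"

definition toughness :: "'a set \<Rightarrow> ('a \<Rightarrow> 'a \<Rightarrow> bool) \<Rightarrow> ereal" where
  "toughness V E = (if complete_graph V E then \<infinity>
     else Inf {ereal (real (card S) / real (num_components V E S)) | S.
                 S \<subseteq> V \<and> num_components V E S \<ge> 2})"

definition induced_subgraph_of ::
  "'b set \<Rightarrow> ('b \<Rightarrow> 'b \<Rightarrow> bool) \<Rightarrow> 'a set \<Rightarrow> ('a \<Rightarrow> 'a \<Rightarrow> bool) \<Rightarrow> bool" where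
  "induced_subgraph_of VH EH V E \<longleftrightarrow>
     (\<exists>f. inj_on f VH \<and> f ` VH \<subseteq> V \<and> (\<forall>x\<in>VH. \<forall>y\<in>VH. EH x y \<longleftrightarrow> E (f x) (f y)))"

definition H_free ::
  "'b set \<Rightarrow> ('b \<Rightarrow> 'b \<Rightarrow> bool) \<Rightarrow> 'a set \<Rightarrow> ('a \<Rightarrow> 'a \<Rightarrow> bool) \<Rightarrow> bool" where
  "H_free VH EH V E \<longleftrightarrow> \<not> induced_subgraph_of VH EH V E"

text \<open>P_2 \<union> k P_1: vertices 0..k+1, the only edge is {0,1}.\<close>
definition P2_kP1_verts :: "nat \<Rightarrow> nat set" where
  "P2_kP1_verts k = {..<k + 2}"

definition P2_kP1_edge :: "nat \<Rightarrow> nat \<Rightarrow> bool" where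
  "P2_kP1_edge x y \<longleftrightarrow> (x = 0 \<and> y = 1) \<or> (x = 1 \<and> y = 0)"

definition ham_path :: "'a set \<Rightarrow> ('a \<Rightarrow> 'a \<Rightarrow> bool) \<Rightarrow> 'a \<Rightarrow> 'a \<Rightarrow> 'a list \<Rightarrow> bool" where
  "ham_path V E a b p \<longleftrightarrow> p \<noteq> [] \<and> distinct p \<and> set p = V \<and> hd p = a \<and> last p = b
     \<and> (\<forall>i. Suc i < length p \<longrightarrow> E (p ! i) (p ! Suc i))"

definition hamiltonian_connected :: "'a set \<Rightarrow> ('a \<Rightarrow> 'a \<Rightarrow> bool) \<Rightarrow> bool" where
  "hamiltonian_connected V E \<longleftrightarrow>
     (\<forall>a\<in>V. \<forall>b\<in>V. a \<noteq> b \<longrightarrow> (\<exists>p. ham_path V E a b p))"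

end

theory Submission
  imports Defs
begin

definition walk :: "('a \<Rightarrow> 'a \<Rightarrow> bool) \<Rightarrow> 'a list \<Rightarrow> bool" where
  "walk E xs \<longleftrightarrow> (\<forall>i. Suc i < length xs \<longrightarrow> E (xs!i) (xs!Suc i))"

lemma walk_Nil[simp]: "walk E []" and walk_single[simp]: "walk E [x]"
  by (auto simp: walk_def)

lemma walk_append:
  "walk E (xs @ ys) \<longleftrightarrow> walk E xs \<and> walk E ys \<and> (xs \<noteq> [] \<longrightarrow> ys \<noteq> [] \<longrightarrow> E (last xs) (hd ys))"
proof (intro iffI conjI impI)
  assume w: "walk E (xs @ ys)"
  show "walk E xs" unfolding walk_def
  proof (intro allI impI)
    fix i assume "Suc i < length xs"
    with w[unfolded walk_def, rule_format, of i] show "E (xs ! i) (xs ! Suc i)" by (simp add: nth_append)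
  qed
  show "walk E ys" unfolding walk_def
  proof (intro allI impI)
    fix i assume "Suc i < length ys"
    with w[unfolded walk_def, rule_format, of "length xs + i"] show "E (ys ! i) (ys ! Suc i)" by (simp add: nth_append)
  qed
  assume "xs \<noteq> []" "ys \<noteq> []"
  with w[unfolded walk_def, rule_format, of "length xs - 1"] show "E (last xs) (hd ys)"
    by (simp add: nth_append last_conv_nth hd_conv_nth)
next
  assume a: "walk E xs \<and> walk E ys \<and> (xs \<noteq> [] \<longrightarrow> ys \<noteq> [] \<longrightarrow> E (last xs) (hd ys))"
  show "walk E (xs @ ys)" unfolding walk_def
  proof (intro allI impI)
    fix i assume i: "Suc i < length (xs @ ys)"
    consider "Suc i < length xs" | "Suc i = length xs" | "Suc i > length xs" by linarith
    then show "E ((xs @ ys) ! i) ((xs @ ys) ! Suc i)"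
    proof cases
      case 1 then show ?thesis using a by (simp add: walk_def nth_append)
    next
      case 2
      then have "xs \<noteq> []" "ys \<noteq> []" using i by auto
      moreover have "i = length xs - 1" using 2 by simp
      ultimately show ?thesis using a by (simp add: nth_append last_conv_nth hd_conv_nth)
    next
      case 3
      then have "Suc (i - length xs) < length ys" using i by auto
      with a 3 show ?thesis unfolding walk_def
        by (auto simp: nth_append Suc_diff_le[symmetric] elim!: allE[of _ "i - length xs"])
    qed
  qed
qed

lemma walk_rev:
  assumes "\<And>x y. E x y \<Longrightarrow> E y x" "walk E xs" shows "walk E (rev xs)"
  unfolding walk_def
proof (intro allI impI)
  fix i assume i: "Suc i < length (rev xs)"
  let ?j = "length xs - Suc (Suc i)"
  have "Suc ?j < length xs" using i by auto
  with assms(2) have "E (xs ! ?j) (xs ! Suc ?j)" by (simp add: walk_def)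
  moreover have "rev xs ! i = xs ! Suc ?j" "rev xs ! Suc i = xs ! ?j" using i
    by (auto simp: rev_nth Suc_diff_Suc)
  ultimately show "E (rev xs ! i) (rev xs ! Suc i)" using assms(1) by auto
qed

lemma walk_take: "walk E xs \<Longrightarrow> walk E (take n xs)"
  by (auto simp: walk_def)

lemma walk_map_upt:
  assumes "\<And>t. i \<le> t \<Longrightarrow> Suc t < j \<Longrightarrow> E (g t) (g (Suc t))"
  shows "walk E (map g [i..<j])"
  unfolding walk_def using assms by (auto simp: nth_append)

lemma walk_map_rev_upt:
  assumes "\<And>x y. E x y \<Longrightarrow> E y x" "\<And>t. i \<le> t \<Longrightarrow> Suc t < j \<Longrightarrow> E (g t) (g (Suc t))"
  shows "walk E (map g (rev [i..<j]))"
  using walk_rev[OF assms(1) walk_map_upt[of i j E g, OF assms(2)]] by (simp add: rev_map)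

definition indep :: "('a \<Rightarrow> 'a \<Rightarrow> bool) \<Rightarrow> 'a set \<Rightarrow> bool" where
  "indep E X \<longleftrightarrow> (\<forall>x\<in>X. \<forall>y\<in>X. \<not> E x y)"

lemma rtranclp_restr_sym:
  assumes "\<And>x y. E x y \<Longrightarrow> E y x" "(restr E W)\<^sup>*\<^sup>* x y" shows "(restr E W)\<^sup>*\<^sup>* y x"
  using assms(2)
proof induction
  case base then show ?case by simp
next
  case (step y z)
  then have "restr E W z y" using assms(1) by (auto simp: restr_def)
  then show ?case using step by (meson converse_rtranclp_into_rtranclp)
qed

lemma rtranclp_restr_in:
  "(restr E W)\<^sup>*\<^sup>* x y \<Longrightarrow> x \<in> W \<Longrightarrow> y \<in> W"
  by (induction rule: rtranclp_induct) (auto simp: restr_def)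

lemma walk_to_path:
  assumes "(restr E W)\<^sup>*\<^sup>* u v" "u \<in> W"
  shows "\<exists>xs. xs \<noteq> [] \<and> hd xs = u \<and> last xs = v \<and> distinct xs \<and> walk E xs \<and> set xs \<subseteq> W"
  using assms(1)
proof induction
  case base then show ?case using assms(2) by (intro exI[of _ "[u]"]) auto
next
  case (step y z)
  then obtain xs where xs: "xs \<noteq> []" "hd xs = u" "last xs = y" "distinct xs" "walk E xs" "set xs \<subseteq> W"
    by blast
  show ?case
  proof (cases "z \<in> set xs")
    case True
    then obtain i where i: "i < length xs" "xs ! i = z" by (auto simp: in_set_conv_nth)
    show ?thesis
      apply (rule exI[of _ "take (Suc i) xs"])
      using xs i by (auto simp: walk_take last_conv_nth hd_conv_nth dest: in_set_takeD)
  next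
    case False
    have "E (last xs) (hd [z])" using step(2) xs by (simp add: restr_def)
    then have "walk E (xs @ [z])" using xs by (simp add: walk_append)
    then show ?thesis
      apply (intro exI[of _ "xs @ [z]"])
      using xs False step(2) by (auto simp: restr_def)
  qed
qed

lemma card_le_1_compl:
  "finite A \<Longrightarrow> card {i\<in>A. \<not> P i} \<le> card A" by (auto intro: card_mono)

locale tg =
  fixes V :: "'a set" and E :: "'a \<Rightarrow> 'a \<Rightarrow> bool" and k :: nat
  assumes graph: "graph V E" and k2: "2 \<le> k"
    and tough: "ereal (real k) \<le> toughness V E"
    and free: "H_free (P2_kP1_verts k) P2_kP1_edge V E"
begin

lemma finV: "finite V" using graph by (simp add: graph_def)
lemma edgeV: "E x y \<Longrightarrow> x \<in> V \<and> y \<in> V" using graph by (simp add: graph_def)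
lemma esym: "E x y \<Longrightarrow> E y x" using graph by (simp add: graph_def)
lemma irr[simp]: "\<not> E x x" using graph by (simp add: graph_def)

lemma comp_finite: "W \<subseteq> V \<Longrightarrow> finite (components W E)"
proof -
  assume "W \<subseteq> V"
  then have "components W E \<subseteq> Pow W" by (auto simp: components_def)
  moreover have "finite (Pow W)" using finV \<open>W \<subseteq> V\<close> finite_subset by blast
  ultimately show ?thesis using finite_subset by blast
qed

lemma comp2:
  assumes "W \<subseteq> V" "u \<in> W" "v \<in> W" "\<not> (restr E W)\<^sup>*\<^sup>* u v"
  shows "2 \<le> card (components W E)"
proof -
  let ?Cu = "{y \<in> W. (restr E W)\<^sup>*\<^sup>* u y}" and ?Cv = "{y \<in> W. (restr E W)\<^sup>*\<^sup>* v y}"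
  have "?Cu \<noteq> ?Cv" using assms by auto
  moreover have sub: "{?Cu, ?Cv} \<subseteq> components W E" using assms by (auto simp: components_def)
  ultimately have "card {?Cu, ?Cv} = 2" by simp
  with card_mono[OF comp_finite[OF assms(1)] sub] show ?thesis by simp
qed

lemma comp_indep:
  assumes "W \<subseteq> V" "\<forall>x\<in>W. \<forall>y\<in>W. \<not> E x y"
  shows "card (components W E) = card W"
proof -
  have eq: "(restr E W)\<^sup>*\<^sup>* x y \<Longrightarrow> x = y" for x y
    by (induction rule: rtranclp_induct) (use assms(2) in \<open>auto simp: restr_def\<close>)
  have s: "{y \<in> W. (restr E W)\<^sup>*\<^sup>* x y} = {x}" if "x \<in> W" for x
    using eq that by auto
  have "components W E = (\<lambda>x. {x}) ` W"
    unfolding components_def using s by (auto simp: image_def)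
  then show ?thesis by (simp add: card_image)
qed

lemma not_complete_if:
  assumes "S \<subseteq> V" "2 \<le> num_components V E S" shows "\<not> complete_graph V E"
proof
  assume c: "complete_graph V E"
  have "components (V - S) E \<subseteq> {V - S}"
  proof
    fix C assume "C \<in> components (V - S) E"
    then obtain x where x: "x \<in> V - S" "C = {y \<in> V - S. (restr E (V - S))\<^sup>*\<^sup>* x y}"
      by (auto simp: components_def)
    have "(restr E (V - S))\<^sup>*\<^sup>* x y" if "y \<in> V - S" for y
    proof (cases "x = y")
      case False
      then have "restr E (V - S) x y" using c x that by (auto simp: complete_graph_def restr_def)
      then show ?thesis by auto
    qed auto
    then show "C \<in> {V - S}" using x by auto
  qed
  then have "card (components (V - S) E) \<le> card {V - S}" by (intro card_mono) auto
  then have "card (components (V - S) E) \<le> 1" by simp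
  then show False using assms(2) by (simp add: num_components_def)
qed

lemma tough_cut:
  assumes "S \<subseteq> V" "2 \<le> num_components V E S"
  shows "k * num_components V E S \<le> card S"
proof -
  have nc: "\<not> complete_graph V E" using not_complete_if[OF assms] .
  let ?c = "num_components V E S"
  have "ereal (real (card S) / real ?c) \<in> {ereal (real (card S) / real (num_components V E S)) | S.
                 S \<subseteq> V \<and> num_components V E S \<ge> 2}" using assms by blast
  then have "toughness V E \<le> ereal (real (card S) / real ?c)"
    using nc unfolding toughness_def by (auto intro: Inf_lower)
  with tough have "ereal (real k) \<le> ereal (real (card S) / real ?c)" by (rule order_trans)
  then have "real k \<le> real (card S) / real ?c" by simp
  moreover have "real ?c > 0" using assms by auto
  ultimately have "real k * real ?c \<le> real (card S)" by (simp add: field_simps)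
  then show ?thesis by (simp only: of_nat_mult[symmetric] of_nat_le_iff)
qed

lemma no_P2kP1:
  assumes "E u v" "K \<subseteq> V" "card K = k" "u \<notin> K" "v \<notin> K"
    "\<forall>x\<in>K. \<not> E u x \<and> \<not> E v x" "\<forall>x\<in>K. \<forall>y\<in>K. \<not> E x y"
  shows False
proof -
  have fK: "finite K" using assms(2) finV finite_subset by blast
  obtain g where g: "bij_betw g {0..<k} K" using ex_bij_betw_nat_finite[OF fK] assms(3) by auto
  define f where "f i = (if i = 0 then u else if i = 1 then v else g (i - 2))" for i
  have uv: "u \<noteq> v" using assms(1) by auto
  have gK: "i < k + 2 \<Longrightarrow> 2 \<le> i \<Longrightarrow> g (i - 2) \<in> K" for i
    using g by (auto simp: bij_betw_def)
  have fK2: "2 \<le> i \<Longrightarrow> i < k + 2 \<Longrightarrow> f i \<in> K" for i using gK by (simp add: f_def)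
  have f0: "f 0 = u" and f1: "f 1 = v" "f (Suc 0) = v" by (simp_all add: f_def)
  have inj: "inj_on f (P2_kP1_verts k)"
  proof (rule inj_onI)
    fix x y assume xy: "x \<in> P2_kP1_verts k" "y \<in> P2_kP1_verts k" "f x = f y"
    have xk: "x < k + 2" "y < k + 2" using xy by (auto simp: P2_kP1_verts_def)
    show "x = y"
    proof (cases "2 \<le> x \<and> 2 \<le> y")
      case True
      then have "g (x - 2) = g (y - 2)" using xy by (simp add: f_def)
      moreover have "x - 2 \<in> {0..<k}" "y - 2 \<in> {0..<k}" using xk True by auto
      ultimately have "x - 2 = y - 2" using g by (auto simp: bij_betw_def inj_on_def)
      then show ?thesis using True by arith
    next
      case False
      have fy: "2 \<le> y \<Longrightarrow> f y \<in> K" using fK2 xk by blast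
      have fx: "2 \<le> x \<Longrightarrow> f x \<in> K" using fK2 xk by blast
      have A: "f a \<noteq> f b" if "a < 2" "2 \<le> b" "2 \<le> b \<Longrightarrow> f b \<in> K" for a b
      proof -
        have "a = 0 \<or> a = 1" using that by auto
        then show ?thesis using that assms(4,5) f0 f1 by auto
      qed
      show ?thesis
      proof (cases "x < 2 \<and> y < 2")
        case True
        then have "x = 0 \<or> x = 1" "y = 0 \<or> y = 1" by auto
        then show ?thesis using xy(3) f0 f1 uv by auto
      next
        case False2: False
        show ?thesis
        proof (cases "x < 2")
          case True
          then have "2 \<le> y" using False2 by auto
          then show ?thesis using A[OF True _ fy] xy(3) by blast
        next
          case f: False
          then have "y < 2" using False by auto
          then show ?thesis using A[OF \<open>y < 2\<close> _ fx] xy(3) f by auto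
        qed
      qed
    qed
  qed
  have img: "f ` P2_kP1_verts k \<subseteq> V"
    using gK assms(1,2) edgeV by (auto simp: f_def P2_kP1_verts_def)
  have edges: "P2_kP1_edge x y \<longleftrightarrow> E (f x) (f y)" if "x \<in> P2_kP1_verts k" "y \<in> P2_kP1_verts k" for x y
  proof -
    have gx: "2 \<le> x \<Longrightarrow> f x \<in> K" and gy: "2 \<le> y \<Longrightarrow> f y \<in> K"
      using gK that by (auto simp: f_def P2_kP1_verts_def)
    have vu: "E v u" using assms(1) by (rule esym)
    have nK: "z \<in> K \<Longrightarrow> \<not> E z u \<and> \<not> E z v" for z
      using assms(6) by (meson esym)
    have e0: "\<not> P2_kP1_edge 0 0" "P2_kP1_edge 0 1" "P2_kP1_edge 1 0" "\<not> P2_kP1_edge 1 1"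
      by (simp_all add: P2_kP1_edge_def)
    have e2: "2 \<le> z \<Longrightarrow> \<not> P2_kP1_edge z w \<and> \<not> P2_kP1_edge w z" for z w
      by (simp add: P2_kP1_edge_def)
    have c0: "P2_kP1_edge 0 y \<longleftrightarrow> E u (f y)"
    proof -
      consider "y = 0" | "y = 1" | "2 \<le> y" by linarith
      then show ?thesis
      proof cases
        case 1 then show ?thesis using e0 f0 irr by metis
      next
        case 2 then show ?thesis using e0 f0 f1 assms(1) by metis
      next
        case 3 then show ?thesis using e2[OF 3] gy[OF 3] assms(6) by blast
      qed
    qed
    have c1: "P2_kP1_edge 1 y \<longleftrightarrow> E v (f y)"
    proof -
      consider "y = 0" | "y = 1" | "2 \<le> y" by linarith
      then show ?thesis
      proof cases
        case 1 then show ?thesis using e0 f0 vu by metis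
      next
        case 2 then show ?thesis using e0 f1 irr by metis
      next
        case 3 then show ?thesis using e2[OF 3] gy[OF 3] assms(6) by blast
      qed
    qed
    have c2: "P2_kP1_edge x y \<longleftrightarrow> E (f x) (f y)" if "2 \<le> x"
    proof -
      consider "y = 0" | "y = 1" | "2 \<le> y" by linarith
      then show ?thesis
      proof cases
        case 1 then show ?thesis using e2[OF that] gx[OF that] nK f0 by metis
      next
        case 2 then show ?thesis using e2[OF that] gx[OF that] nK f1 by metis
      next
        case 3 then show ?thesis using e2[OF that] gx[OF that] gy[OF 3] assms(7) by blast
      qed
    qed
    consider "x = 0" | "x = 1" | "2 \<le> x" by linarith
    then show ?thesis
    proof cases
      case 1 then show ?thesis using c0 f0 by simp
    next
      case 2 then show ?thesis using c1 f1 by simp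
    next
      case 3 then show ?thesis using c2 by simp
    qed
  qed
  have "induced_subgraph_of (P2_kP1_verts k) P2_kP1_edge V E"
    unfolding induced_subgraph_of_def using inj img edges by blast
  then show False using free by (simp add: H_free_def)
qed

definition nb :: "'a set \<Rightarrow> 'a set" where "nb X = {v. \<exists>w\<in>X. E v w}"

lemma F1:
  assumes "X \<subseteq> V" "indep E X" "w \<in> X" "E p w"
  shows "card {x\<in>X. \<not> E p x} < k"
proof (rule ccontr)
  assume "\<not> ?thesis"
  then obtain K where K: "K \<subseteq> {x\<in>X. \<not> E p x}" "card K = k"
    by (metis not_less obtain_subset_with_card_n)
  have pX: "p \<notin> X" using assms(2,3,4) unfolding indep_def by blast
  show False
  proof (rule no_P2kP1[OF assms(4) _ K(2)])
    show "K \<subseteq> V" using K assms by auto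
    show "p \<notin> K" "w \<notin> K" using K pX assms(4) by auto
    show "\<forall>x\<in>K. \<not> E p x \<and> \<not> E w x" using K(1) assms(2,3) unfolding indep_def by blast
    show "\<forall>x\<in>K. \<forall>y\<in>K. \<not> E x y" using K(1) assms(2) unfolding indep_def by blast
  qed
qed

lemma F2:
  assumes "X \<subseteq> V" "indep E X" "k \<le> card X" "u \<notin> nb X" "v \<notin> nb X"
  shows "\<not> E u v"
proof
  assume uv: "E u v"
  obtain K where K: "K \<subseteq> X" "card K = k" using obtain_subset_with_card_n[OF assms(3)] by metis
  have "E v u" using uv by (rule esym)
  then have "u \<notin> X" "v \<notin> X" using assms(4,5) uv unfolding nb_def by blast+
  show False
  proof (rule no_P2kP1[OF uv _ K(2)])
    show "K \<subseteq> V" using K assms by auto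
    show "u \<notin> K" "v \<notin> K" using K \<open>u \<notin> X\<close> \<open>v \<notin> X\<close> by auto
    show "\<forall>x\<in>K. \<not> E u x \<and> \<not> E v x" using K(1) assms(4,5) unfolding nb_def by blast
    show "\<forall>x\<in>K. \<forall>y\<in>K. \<not> E x y" using K(1) assms(2) unfolding indep_def by blast
  qed
qed

lemma card_split_min:
  fixes D :: "nat set"
  assumes "finite D" "\<forall>e\<in>D. \<forall>f\<in>D. e < f \<longrightarrow> e \<in> A \<or> f \<in> B"
  shows "card D \<le> card (D \<inter> A) + card (D \<inter> B) + 1"
proof (cases "D \<subseteq> A")
  case True
  then have "D \<inter> A = D" by auto
  then show ?thesis by simp
next
  case False
  define e0 where "e0 = Min (D - A)"
  have e0: "e0 \<in> D - A" using False assms(1) unfolding e0_def by (intro Min_in) auto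
  have "D \<subseteq> (D \<inter> A) \<union> (D \<inter> B) \<union> {e0}"
  proof
    fix d assume d: "d \<in> D"
    show "d \<in> (D \<inter> A) \<union> (D \<inter> B) \<union> {e0}"
    proof (cases "d \<in> A")
      case False
      then have "e0 \<le> d" using d assms(1) unfolding e0_def by (intro Min_le) auto
      show ?thesis
      proof (cases "e0 = d")
        case False
        then have "e0 < d" using \<open>e0 \<le> d\<close> by simp
        then have "e0 \<in> A \<or> d \<in> B" using assms(2) e0 d by auto
        then show ?thesis using e0 d by auto
      qed simp
    qed (use d in auto)
  qed
  then have "card D \<le> card ((D \<inter> A) \<union> (D \<inter> B) \<union> {e0})"
    using assms(1) by (intro card_mono) auto
  also have "\<dots> \<le> card ((D \<inter> A) \<union> (D \<inter> B)) + card {e0}" by (rule card_Un_le)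
  also have "\<dots> \<le> card (D \<inter> A) + card (D \<inter> B) + 1" using card_Un_le by simp
  finally show ?thesis .
qed

end

locale lp = tg +
  fixes P :: "'a list"
  assumes Pd: "distinct P" and PV: "set P \<subseteq> V" and Pw: "walk E P" and PL: "2 \<le> length P"
    and Pmax: "\<And>Q. distinct Q \<Longrightarrow> set Q \<subseteq> V \<Longrightarrow> walk E Q \<Longrightarrow> Q \<noteq> [] \<Longrightarrow> hd Q = hd P
       \<Longrightarrow> last Q = last P \<Longrightarrow> length Q \<le> length P"
begin

lemma Pedge: "Suc t < length P \<Longrightarrow> E (P!t) (P!Suc t)"
  using Pw by (simp add: walk_def)

lemma PnthV: "i < length P \<Longrightarrow> P!i \<in> V"
  using PV by auto

lemma reroute:
  assumes "distinct (P @ Q)" "set Q \<subseteq> V" "distinct I" "set I \<subseteq> {..<length P + length Q}"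
    "I \<noteq> []" "hd I = 0" "last I = length P - 1" "walk E (map ((!) (P @ Q)) I)" "length P < length I"
  shows False
proof -
  let ?R = "map ((!) (P @ Q)) I"
  have inj: "inj_on ((!) (P @ Q)) (set I)"
  proof (rule inj_onI)
    fix x y assume "x \<in> set I" "y \<in> set I" "(P @ Q) ! x = (P @ Q) ! y"
    then show "x = y" using assms(4) nth_eq_iff_index_eq[OF assms(1), of x y] by auto
  qed
  have Pne: "P \<noteq> []" using PL by auto
  have "distinct ?R" using assms(3) inj by (simp add: distinct_map)
  moreover have "set ?R \<subseteq> V"
  proof
    fix x assume "x \<in> set ?R"
    then obtain i where i: "i \<in> set I" "x = (P @ Q) ! i" by auto
    then have "i < length (P @ Q)" using assms(4) by auto
    then have "x \<in> set (P @ Q)" using i(2) nth_mem by blast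
    then show "x \<in> V" using PV assms(2) by auto
  qed
  moreover have "hd ?R = hd P" using assms(5,6) Pne by (simp add: hd_map nth_append hd_conv_nth)
  moreover have "last ?R = last P" using assms(5,7) Pne by (simp add: last_map nth_append last_conv_nth)
  ultimately have "length ?R \<le> length P" using Pmax[of ?R] assms(5,8) by simp
  then show False using assms(9) by simp
qed

lemma wseg: "j \<le> length P \<Longrightarrow> walk E (map ((!) (P @ Q)) [i..<j])"
  by (rule walk_map_upt) (simp add: nth_append Pedge)

lemma wsegr: "j \<le> length P \<Longrightarrow> walk E (map ((!) (P @ Q)) (rev [i..<j]))"
  by (rule walk_map_rev_upt) (simp_all add: nth_append Pedge esym)

lemma mapQ: "map ((!) (P @ Q)) [length P..<length P + length Q] = Q"
  by (rule nth_equalityI) (auto simp: nth_append)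

lemma seg:
  assumes "i < j" "j \<le> length P"
  shows "map ((!) (P @ Q)) [i..<j] \<noteq> []" "hd (map ((!) (P @ Q)) [i..<j]) = P!i"
    "last (map ((!) (P @ Q)) [i..<j]) = P!(j - 1)" "walk E (map ((!) (P @ Q)) [i..<j])"
proof -
  have "j - Suc 0 < length P" using assms by auto
  then show "map ((!) (P @ Q)) [i..<j] \<noteq> []" "hd (map ((!) (P @ Q)) [i..<j]) = P!i"
    "last (map ((!) (P @ Q)) [i..<j]) = P!(j - 1)" "walk E (map ((!) (P @ Q)) [i..<j])"
    using assms wseg[OF assms(2)] by (simp_all add: hd_map last_map nth_append del: upt_Suc)
qed

lemma rseg:
  assumes "i < j" "j \<le> length P"
  shows "map ((!) (P @ Q)) (rev [i..<j]) \<noteq> []" "hd (map ((!) (P @ Q)) (rev [i..<j])) = P!(j - 1)"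
    "last (map ((!) (P @ Q)) (rev [i..<j])) = P!i" "walk E (map ((!) (P @ Q)) (rev [i..<j]))"
proof -
  have "j - Suc 0 < length P" using assms by auto
  then show "map ((!) (P @ Q)) (rev [i..<j]) \<noteq> []" "hd (map ((!) (P @ Q)) (rev [i..<j])) = P!(j - 1)"
    "last (map ((!) (P @ Q)) (rev [i..<j])) = P!i" "walk E (map ((!) (P @ Q)) (rev [i..<j]))"
    using assms wsegr[OF assms(2)] by (simp_all add: hd_map last_map hd_rev last_rev nth_append del: upt_Suc)
qed

lemma walk3: "walk E A \<Longrightarrow> walk E B \<Longrightarrow> walk E C \<Longrightarrow> A \<noteq> [] \<Longrightarrow> B \<noteq> [] \<Longrightarrow> C \<noteq> []
  \<Longrightarrow> E (last A) (hd B) \<Longrightarrow> E (last B) (hd C) \<Longrightarrow> walk E (A @ B @ C)"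
  by (simp add: walk_append)

lemma walk4: "walk E A \<Longrightarrow> walk E B \<Longrightarrow> walk E C \<Longrightarrow> walk E D \<Longrightarrow> A \<noteq> [] \<Longrightarrow> B \<noteq> [] \<Longrightarrow> C \<noteq> []
  \<Longrightarrow> D \<noteq> [] \<Longrightarrow> E (last A) (hd B) \<Longrightarrow> E (last B) (hd C) \<Longrightarrow> E (last C) (hd D) \<Longrightarrow> walk E (A @ B @ C @ D)"
  by (simp add: walk_append)

lemma walk5: "walk E A \<Longrightarrow> walk E B \<Longrightarrow> walk E C \<Longrightarrow> walk E D \<Longrightarrow> walk E F \<Longrightarrow> A \<noteq> [] \<Longrightarrow> B \<noteq> [] \<Longrightarrow> C \<noteq> []
  \<Longrightarrow> D \<noteq> [] \<Longrightarrow> F \<noteq> [] \<Longrightarrow> E (last A) (hd B) \<Longrightarrow> E (last B) (hd C) \<Longrightarrow> E (last C) (hd D)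
  \<Longrightarrow> E (last D) (hd F) \<Longrightarrow> walk E (A @ B @ C @ D @ F)"
  by (simp add: walk_append)

definition okQ :: "'a list \<Rightarrow> bool" where
  "okQ Q \<longleftrightarrow> distinct Q \<and> set Q \<subseteq> V \<and> set Q \<inter> set P = {} \<and> walk E Q \<and> Q \<noteq> []"

lemma okQ_distinct: "okQ Q \<Longrightarrow> distinct (P @ Q)"
  using Pd by (auto simp: okQ_def)

lemma ins1:
  assumes Q: "okQ Q" and i: "Suc i < length P" and e: "E (P!i) (hd Q)" "E (last Q) (P!Suc i)"
  shows False
proof -
  let ?L = "length P" and ?q = "length Q" and ?f = "(!) (P @ Q)"
  let ?I = "[0..<Suc i] @ [?L..<?L + ?q] @ [Suc i..<?L]"
  have Qn: "Q \<noteq> []" "walk E Q" using Q by (auto simp: okQ_def)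
  have s1: "0 < Suc i" "Suc i \<le> ?L" and s2: "Suc i < ?L" "?L \<le> ?L" using i by auto
  have w: "walk E (map ?f ?I)"
    unfolding map_append mapQ
    by (rule walk3[OF seg(4)[OF s1] Qn(2) seg(4)[OF s2] seg(1)[OF s1] Qn(1) seg(1)[OF s2]])
       (use e seg(2,3)[OF s1, of Q] seg(2,3)[OF s2, of Q] in auto)
  show False
    by (rule reroute[OF okQ_distinct[OF Q] _ _ _ _ _ _ w]) (use Q i Qn in \<open>auto simp: okQ_def last_append simp del: upt_Suc\<close>)
qed

lemma ins2:
  assumes Q: "okQ Q" and ij: "i < j" "Suc j < length P"
    and e: "E (P!i) (hd Q)" "E (last Q) (P!j)" "E (P!Suc i) (P!Suc j)"
  shows False
proof -
  let ?L = "length P" and ?q = "length Q" and ?f = "(!) (P @ Q)"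
  let ?I = "[0..<Suc i] @ [?L..<?L + ?q] @ rev [Suc i..<Suc j] @ [Suc j..<?L]"
  have Qn: "Q \<noteq> []" "walk E Q" using Q by (auto simp: okQ_def)
  have s1: "0 < Suc i" "Suc i \<le> ?L" and s2: "Suc i < Suc j" "Suc j \<le> ?L" and s3: "Suc j < ?L" "?L \<le> ?L"
    using ij by auto
  have w: "walk E (map ?f ?I)"
    unfolding map_append mapQ
    by (rule walk4[OF seg(4)[OF s1] Qn(2) rseg(4)[OF s2] seg(4)[OF s3] seg(1)[OF s1] Qn(1) rseg(1)[OF s2] seg(1)[OF s3]])
       (use e seg(2,3)[OF s1, of Q] rseg(2,3)[OF s2, of Q] seg(2,3)[OF s3, of Q] in auto)
  show False
    by (rule reroute[OF okQ_distinct[OF Q] _ _ _ _ _ _ w]) (use Q ij Qn in \<open>auto simp: okQ_def last_append simp del: upt_Suc\<close>)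
qed

lemma ins3:
  assumes Q: "okQ Q" and ij: "0 < i" "i < j" "j < length P"
    and e: "E (P!(i - 1)) (P!(j - 1))" "E (P!i) (hd Q)" "E (last Q) (P!j)"
  shows False
proof -
  let ?L = "length P" and ?q = "length Q" and ?f = "(!) (P @ Q)"
  let ?I = "[0..<i] @ rev [i..<j] @ [?L..<?L + ?q] @ [j..<?L]"
  have Qn: "Q \<noteq> []" "walk E Q" using Q by (auto simp: okQ_def)
  have s1: "0 < i" "i \<le> ?L" and s2: "i < j" "j \<le> ?L" and s3: "j < ?L" "?L \<le> ?L"
    using ij by auto
  have w: "walk E (map ?f ?I)"
    unfolding map_append mapQ
    by (rule walk4[OF seg(4)[OF s1] rseg(4)[OF s2] Qn(2) seg(4)[OF s3] seg(1)[OF s1] rseg(1)[OF s2] Qn(1) seg(1)[OF s3]])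
       (use e seg(2,3)[OF s1, of Q] rseg(2,3)[OF s2, of Q] seg(2,3)[OF s3, of Q] in auto)
  show False
    by (rule reroute[OF okQ_distinct[OF Q] _ _ _ _ _ _ w]) (use Q ij Qn in \<open>auto simp: okQ_def last_append simp del: upt_Suc\<close>)
qed

lemma patB:
  assumes Q: "okQ Q" and ij: "Suc e < f" "f \<le> t" "Suc t < length P"
    and ed: "E (P!e) (hd Q)" "E (last Q) (P!f)" "E (P!t) (P!Suc e)" "E (P!(f - 1)) (P!Suc t)"
  shows False
proof -
  let ?L = "length P" and ?q = "length Q" and ?f = "(!) (P @ Q)"
  let ?I = "[0..<Suc e] @ [?L..<?L + ?q] @ [f..<Suc t] @ [Suc e..<f] @ [Suc t..<?L]"
  have Qn: "Q \<noteq> []" "walk E Q" using Q by (auto simp: okQ_def)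
  have s1: "0 < Suc e" "Suc e \<le> ?L" and s2: "f < Suc t" "Suc t \<le> ?L" and s3: "Suc e < f" "f \<le> ?L"
    and s4: "Suc t < ?L" "?L \<le> ?L"
    using ij by auto
  have w: "walk E (map ?f ?I)"
    unfolding map_append mapQ
    by (rule walk5[OF seg(4)[OF s1] Qn(2) seg(4)[OF s2] seg(4)[OF s3] seg(4)[OF s4]
          seg(1)[OF s1] Qn(1) seg(1)[OF s2] seg(1)[OF s3] seg(1)[OF s4]])
       (use ed seg(2,3)[OF s1, of Q] seg(2,3)[OF s2, of Q] seg(2,3)[OF s3, of Q] seg(2,3)[OF s4, of Q] in auto)
  show False
    by (rule reroute[OF okQ_distinct[OF Q] _ _ _ _ _ _ w]) (use Q ij Qn in \<open>auto simp: okQ_def last_append simp del: upt_Suc\<close>)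
qed

lemma patB':
  assumes Q: "okQ Q" and ij: "t < e" "Suc e < f" "f < length P"
    and ed: "E (P!t) (P!Suc e)" "E (P!(f - 1)) (P!Suc t)" "E (P!e) (hd Q)" "E (last Q) (P!f)"
  shows False
proof -
  let ?L = "length P" and ?q = "length Q" and ?f = "(!) (P @ Q)"
  let ?I = "[0..<Suc t] @ [Suc e..<f] @ [Suc t..<Suc e] @ [?L..<?L + ?q] @ [f..<?L]"
  have Qn: "Q \<noteq> []" "walk E Q" using Q by (auto simp: okQ_def)
  have s1: "0 < Suc t" "Suc t \<le> ?L" and s2: "Suc e < f" "f \<le> ?L" and s3: "Suc t < Suc e" "Suc e \<le> ?L"
    and s4: "f < ?L" "?L \<le> ?L"
    using ij by auto
  have w: "walk E (map ?f ?I)"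
    unfolding map_append mapQ
    by (rule walk5[OF seg(4)[OF s1] seg(4)[OF s2] seg(4)[OF s3] Qn(2) seg(4)[OF s4]
          seg(1)[OF s1] seg(1)[OF s2] seg(1)[OF s3] Qn(1) seg(1)[OF s4]])
       (use ed seg(2,3)[OF s1, of Q] seg(2,3)[OF s2, of Q] seg(2,3)[OF s3, of Q] seg(2,3)[OF s4, of Q] in auto)
  show False
    by (rule reroute[OF okQ_distinct[OF Q] _ _ _ _ _ _ w]) (use Q ij Qn in \<open>auto simp: okQ_def last_append simp del: upt_Suc\<close>)
qed

end

lemma card_le_insert1: "finite A \<Longrightarrow> B \<subseteq> insert x A \<Longrightarrow> card B \<le> card A + 1"
proof -
  assume a: "finite A" "B \<subseteq> insert x A"
  then have "card B \<le> card (insert x A)" by (intro card_mono) auto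
  also have "\<dots> \<le> card A + 1" using a(1) by (simp add: card_insert_if)
  finally show ?thesis .
qed

context lp
begin

lemma Pne: "P \<noteq> []" using PL by auto

lemma inj_succ: "inj_on (\<lambda>i. P ! Suc i) {i. Suc i < length P}"
  using Pd by (auto simp: inj_on_def nth_eq_iff_index_eq)

lemma inj_pred: "inj_on (\<lambda>i. P ! (i - 1)) {i. 0 < i \<and> i < length P}"
  using Pd by (auto simp: inj_on_def nth_eq_iff_index_eq)

lemma inj_nth: "inj_on (\<lambda>i. P ! i) {i. i < length P}"
  using Pd by (auto simp: inj_on_def nth_eq_iff_index_eq)

lemma offpath_noedge:
  assumes y: "y \<in> V" "y \<notin> set P" and z: "z \<in> V" "z \<notin> set P"
  shows "\<not> E y z"
proof
  assume yz: "E y z"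
  define W where "W = V - set P"
  define H where "H = {w. (restr E W)\<^sup>*\<^sup>* y w}"
  have yW: "y \<in> W" using y by (simp add: W_def)
  have HW: "H \<subseteq> W" using rtranclp_restr_in yW by (auto simp: H_def)
  have yH: "y \<in> H" by (simp add: H_def)
  have zH: "z \<in> H" using yz y z by (auto simp: H_def W_def restr_def)
  define NH where "NH = {i. i < length P \<and> (\<exists>w\<in>H. E (P!i) w)}"
  have hpath: "\<exists>Q. okQ Q \<and> hd Q = w1 \<and> last Q = w2" if "w1 \<in> H" "w2 \<in> H" for w1 w2
  proof -
    have "(restr E W)\<^sup>*\<^sup>* w1 y" using that(1) rtranclp_restr_sym[of E, OF esym] by (auto simp: H_def)
    then have r: "(restr E W)\<^sup>*\<^sup>* w1 w2" using that(2) by (auto simp: H_def)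
    have wW: "w1 \<in> W" using that HW by auto
    obtain xs where "xs \<noteq> []" "hd xs = w1" "last xs = w2" "distinct xs" "walk E xs" "set xs \<subseteq> W"
      using walk_to_path[OF r wW] by blast
    then show ?thesis by (intro exI[of _ xs]) (auto simp: okQ_def W_def)
  qed
  have H1: "\<not> E (P!Suc i) w" if "i \<in> NH" "Suc i < length P" "w \<in> H" for i w
  proof
    assume e: "E (P!Suc i) w"
    note th = that
    obtain w1 where w1: "w1 \<in> H" "E (P!i) w1" using th(1) by (auto simp: NH_def)
    obtain Q where Q: "okQ Q" "hd Q = w1" "last Q = w" using hpath[OF w1(1) th(3)] by blast
    show False by (rule ins1[OF Q(1) th(2)]) (use Q w1 esym[OF e] in auto)
  qed
  have H2: "\<not> E (P!Suc i) (P!Suc j)" if "i \<in> NH" "j \<in> NH" "i < j" "Suc j < length P" for i j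
  proof
    assume e: "E (P!Suc i) (P!Suc j)"
    note th = that
    obtain w1 where w1: "w1 \<in> H" "E (P!i) w1" using th(1) by (auto simp: NH_def)
    obtain w2 where w2: "w2 \<in> H" "E (P!j) w2" using th(2) by (auto simp: NH_def)
    obtain Q where Q: "okQ Q" "hd Q = w1" "last Q = w2" using hpath[OF w1(1) w2(1)] by blast
    have "E w2 (P!j)" using w2(2) by (rule esym)
    then show False by (intro ins2[OF Q(1) th(3,4)]) (use Q w1 e in auto)
  qed
  define S where "S = (\<lambda>i. P!i) ` NH"
  have SV: "S \<subseteq> V" using PV by (auto simp: S_def NH_def)
  have inv: "(restr E (V - S))\<^sup>*\<^sup>* y w \<Longrightarrow> w \<in> H" for w
  proof (induction rule: rtranclp_induct)
    case base then show ?case by (rule yH)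
  next
    case (step w w')
    have e: "E w w'" "w' \<in> V" "w' \<notin> S" using step(2) by (auto simp: restr_def)
    have "w' \<notin> set P"
    proof
      assume "w' \<in> set P"
      then obtain i where i: "i < length P" "P!i = w'" by (auto simp: in_set_conv_nth)
      have "E (P!i) w" using esym[OF e(1)] i(2) by simp
      then have "i \<in> NH" using i(1) step(3) by (auto simp: NH_def)
      then show False using e(3) i(2) by (auto simp: S_def)
    qed
    then have "restr E W w w'" using e step(3) HW by (auto simp: restr_def W_def)
    then show ?case using step(3) by (auto simp: H_def)
  qed
  obtain s where s: "s \<in> set P" "s \<notin> S"
  proof (cases "0 \<in> NH")
    case False
    have "P!0 \<notin> S"
    proof
      assume "P!0 \<in> S"
      then obtain i where "i \<in> NH" "P!i = P!0" by (auto simp: S_def)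
      moreover have "i < length P" using \<open>i \<in> NH\<close> by (simp add: NH_def)
      ultimately have "i = 0" using nth_eq_iff_index_eq[OF Pd, of i 0] PL Pne by simp
      then show False using \<open>i \<in> NH\<close> False by simp
    qed
    moreover have "0 < length P" using PL by linarith
    then have "P!0 \<in> set P" by (rule nth_mem)
    ultimately show ?thesis using that by blast
  next
    case True
    have l1: "Suc 0 < length P" using PL by simp
    have "P!1 \<notin> S"
    proof
      assume "P!1 \<in> S"
      then obtain i where "i \<in> NH" "P!i = P!1" by (auto simp: S_def)
      moreover have "i < length P" using \<open>i \<in> NH\<close> by (simp add: NH_def)
      ultimately have "i = 1" using nth_eq_iff_index_eq[OF Pd, of i 1] l1 by simp
      then obtain w where "w \<in> H" "E (P!1) w" using \<open>i \<in> NH\<close> by (auto simp: NH_def)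
      then show False using H1[OF True l1] by simp
    qed
    moreover have "P!1 \<in> set P" using l1 by (intro nth_mem) simp
    ultimately show ?thesis using that by blast
  qed
  have "\<not> (restr E (V - S))\<^sup>*\<^sup>* y s" using inv s(1) HW by (auto simp: W_def)
  moreover have "y \<in> V - S" "s \<in> V - S" using y s PV SV by (auto simp: S_def NH_def)
  ultimately have "2 \<le> num_components V E S"
    unfolding num_components_def by (intro comp2) auto
  with tough_cut[OF SV] have "k * 2 \<le> card S"
    by (meson le_trans mult_le_mono2)
  also have "card S = card NH" unfolding S_def
    by (rule card_image, rule inj_on_subset[OF inj_nth]) (auto simp: NH_def)
  finally have cNH: "2 * k \<le> card NH" by simp
  define K0 where "K0 = (\<lambda>i. P ! Suc i) ` {i \<in> NH. Suc i < length P}"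
  have fNH: "finite NH" by (simp add: NH_def)
  have "card NH \<le> card {i \<in> NH. Suc i < length P} + 1"
    by (rule card_le_insert1[where x = "length P - 1"]) (use fNH in \<open>auto simp: NH_def\<close>)
  also have "card {i \<in> NH. Suc i < length P} = card K0" unfolding K0_def
    by (rule card_image[symmetric], rule inj_on_subset[OF inj_succ]) auto
  finally have "k \<le> card K0" using cNH k2 by linarith
  then obtain K where K: "K \<subseteq> K0" "card K = k" by (meson obtain_subset_with_card_n)
  show False
  proof (rule no_P2kP1[OF yz _ K(2)])
    show "K \<subseteq> V" using K(1) PnthV by (auto simp: K0_def)
    show "y \<notin> K" "z \<notin> K" using K(1) y z by (auto simp: K0_def)
    show "\<forall>x\<in>K. \<not> E y x \<and> \<not> E z x"
    proof
      fix x assume "x \<in> K"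
      then obtain i where i: "i \<in> NH" "Suc i < length P" "x = P ! Suc i" using K(1) by (auto simp: K0_def)
      have "\<not> E x y" "\<not> E x z" using H1[OF i(1,2) yH] H1[OF i(1,2) zH] i(3) by auto
      then show "\<not> E y x \<and> \<not> E z x" using esym by blast
    qed
    show "\<forall>x\<in>K. \<forall>x'\<in>K. \<not> E x x'"
    proof (intro ballI)
      fix x x' assume xK: "x \<in> K" "x' \<in> K"
      obtain i where i: "i \<in> NH" "Suc i < length P" "x = P ! Suc i" using K(1) xK(1) by (auto simp: K0_def)
      obtain j where j: "j \<in> NH" "Suc j < length P" "x' = P ! Suc j" using K(1) xK(2) by (auto simp: K0_def)
      consider "i < j" | "i = j" | "j < i" by linarith
      then show "\<not> E x x'"
      proof cases
        case 1 then show ?thesis using H2[OF i(1) j(1) 1 j(2)] i j by simp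
      next
        case 2 then show ?thesis using i j by simp
      next
        case 3 then have "\<not> E x' x" using H2[OF j(1) i(1) 3 i(2)] i j by simp
        then show ?thesis using esym by blast
      qed
    qed
  qed
qed

end

locale lph = lp +
  fixes h assumes hV: "h \<in> V" and hP: "h \<notin> set P"
begin

definition "Nh = {i. i < length P \<and> E (P!i) h}"
definition "Sx = {i \<in> Nh. Suc i < length P}"
definition "Sy = {i \<in> Nh. 0 < i}"
definition "X = insert h ((\<lambda>i. P!Suc i) ` Sx)"
definition "Y = insert h ((\<lambda>i. P!(i - 1)) ` Sy)"

lemma finNh: "finite Nh" by (simp add: Nh_def)

lemma okh: "okQ [h]" using hV hP by (simp add: okQ_def)

lemma nbh: "E w h \<Longrightarrow> w \<in> set P"
proof (rule ccontr)
  assume e: "E w h" "w \<notin> set P"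
  have "w \<in> V" using edgeV[OF e(1)] by simp
  then show False using offpath_noedge[OF _ e(2) hV hP] e(1) by blast
qed

lemma b1: "i \<in> Nh \<Longrightarrow> Suc i < length P \<Longrightarrow> \<not> E (P!Suc i) h"
proof
  assume a: "i \<in> Nh" "Suc i < length P" "E (P!Suc i) h"
  have "E h (P!Suc i)" using a(3) by (rule esym)
  then show False using ins1[OF okh a(2)] a(1) by (simp add: Nh_def)
qed

lemma cNh: "2 * k \<le> card Nh"
proof -
  define S where "S = (\<lambda>i. P!i) ` Nh"
  have SV: "S \<subseteq> V" using PnthV by (auto simp: S_def Nh_def)
  have inv: "(restr E (V - S))\<^sup>*\<^sup>* h w \<Longrightarrow> w = h" for w
  proof (induction rule: rtranclp_induct)
    case base then show ?case by simp
  next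
    case (step w w')
    have e: "E w w'" "w' \<notin> S" using step(2) by (auto simp: restr_def)
    have e': "E w' h" using esym e(1) step(3) by simp
    then have "w' \<in> set P" by (rule nbh)
    then obtain i where i: "i < length P" "P!i = w'" by (auto simp: in_set_conv_nth)
    then have "i \<in> Nh" using e' by (simp add: Nh_def)
    then show ?case using e(2) i(2) by (auto simp: S_def)
  qed
  obtain s where s: "s \<in> set P" "s \<notin> S"
  proof (cases "0 \<in> Nh")
    case False
    have "P!0 \<notin> S"
    proof
      assume "P!0 \<in> S"
      then obtain i where "i \<in> Nh" "P!i = P!0" by (auto simp: S_def)
      moreover have "i < length P" using \<open>i \<in> Nh\<close> by (simp add: Nh_def)
      ultimately have "i = 0" using nth_eq_iff_index_eq[OF Pd, of i 0] PL Pne by simp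
      then show False using \<open>i \<in> Nh\<close> False by simp
    qed
    moreover have "0 < length P" using PL by linarith
    then have "P!0 \<in> set P" by (rule nth_mem)
    ultimately show ?thesis using that by blast
  next
    case True
    have l1: "Suc 0 < length P" using PL by simp
    have "P!1 \<notin> S"
    proof
      assume "P!1 \<in> S"
      then obtain i where "i \<in> Nh" "P!i = P!1" by (auto simp: S_def)
      moreover have "i < length P" using \<open>i \<in> Nh\<close> by (simp add: Nh_def)
      ultimately have "i = 1" using nth_eq_iff_index_eq[OF Pd, of i 1] l1 by simp
      then show False using b1[OF True l1] \<open>i \<in> Nh\<close> by (simp add: Nh_def)
    qed
    moreover have "P!1 \<in> set P" using l1 by (intro nth_mem) simp
    ultimately show ?thesis using that by blast
  qed
  have "\<not> (restr E (V - S))\<^sup>*\<^sup>* h s" using inv s(1) hP by blast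
  moreover have "h \<in> V - S" "s \<in> V - S" using hV hP s PV by (auto simp: S_def Nh_def)
  ultimately have "2 \<le> num_components V E S"
    unfolding num_components_def by (intro comp2) auto
  with tough_cut[OF SV] have "k * 2 \<le> card S"
    by (meson le_trans mult_le_mono2)
  also have "card S = card Nh" unfolding S_def
    by (rule card_image, rule inj_on_subset[OF inj_nth]) (auto simp: Nh_def)
  finally show ?thesis by simp
qed

lemma cSx: "card Nh \<le> card Sx + 1"
  by (rule card_le_insert1[where x = "length P - 1"]) (use finNh in \<open>auto simp: Sx_def Nh_def\<close>)

lemma cSy: "card Nh \<le> card Sy + 1"
  by (rule card_le_insert1[where x = "0"]) (use finNh in \<open>auto simp: Sy_def Nh_def\<close>)

lemma hX: "h \<notin> (\<lambda>i. P!Suc i) ` Sx" using hP by (auto simp: Sx_def Nh_def)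
lemma hY: "h \<notin> (\<lambda>i. P!(i - 1)) ` Sy"
proof
  assume "h \<in> (\<lambda>i. P!(i - 1)) ` Sy"
  then obtain i where "i \<in> Sy" "h = P!(i - 1)" by auto
  moreover have "i - 1 < length P" using \<open>i \<in> Sy\<close> by (auto simp: Sy_def Nh_def)
  ultimately show False using hP nth_mem by metis
qed

lemma cX: "2 * k \<le> card X"
proof -
  have "card ((\<lambda>i. P!Suc i) ` Sx) = card Sx"
    by (rule card_image, rule inj_on_subset[OF inj_succ]) (auto simp: Sx_def)
  moreover have "finite Sx" using finNh by (simp add: Sx_def)
  ultimately have "card X = card Sx + 1" using hX by (simp add: X_def)
  then show ?thesis using cNh cSx by linarith
qed

lemma cY: "2 * k \<le> card Y"
proof -
  have "card ((\<lambda>i. P!(i - 1)) ` Sy) = card Sy"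
    by (rule card_image, rule inj_on_subset[OF inj_pred]) (auto simp: Sy_def Nh_def)
  moreover have "finite Sy" using finNh by (simp add: Sy_def)
  ultimately have "card Y = card Sy + 1" using hY by (simp add: Y_def)
  then show ?thesis using cNh cSy by linarith
qed

lemma XV: "X \<subseteq> V" using hV PnthV by (auto simp: X_def Sx_def)
lemma YV: "Y \<subseteq> V" using hV PnthV by (auto simp: Y_def Sy_def Nh_def)

lemma succ_succ: "i \<in> Nh \<Longrightarrow> j \<in> Nh \<Longrightarrow> i < j \<Longrightarrow> Suc j < length P \<Longrightarrow> \<not> E (P!Suc i) (P!Suc j)"
proof
  assume a: "i \<in> Nh" "j \<in> Nh" "i < j" "Suc j < length P" "E (P!Suc i) (P!Suc j)"
  have "E h (P!j)" using a(2) esym by (simp add: Nh_def)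
  then show False using ins2[OF okh a(3,4)] a(1,5) by (simp add: Nh_def)
qed

lemma pred_pred: "i \<in> Nh \<Longrightarrow> j \<in> Nh \<Longrightarrow> 0 < i \<Longrightarrow> i < j \<Longrightarrow> \<not> E (P!(i - 1)) (P!(j - 1))"
proof
  assume a: "i \<in> Nh" "j \<in> Nh" "0 < i" "i < j" "E (P!(i - 1)) (P!(j - 1))"
  have "E h (P!j)" using a(2) esym by (simp add: Nh_def)
  moreover have "j < length P" using a(2) by (simp add: Nh_def)
  ultimately show False using ins3[OF okh a(3,4)] a(1,5) by (simp add: Nh_def)
qed

lemma indepX: "indep E X"
  unfolding indep_def
proof (intro ballI)
  fix x y assume xy: "x \<in> X" "y \<in> X"
  have sh: "\<not> E (P!Suc i) h \<and> \<not> E h (P!Suc i)" if "i \<in> Sx" for i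
    using b1[of i] that esym by (auto simp: Sx_def)
  have ss: "\<not> E (P!Suc i) (P!Suc j)" if "i \<in> Sx" "j \<in> Sx" for i j
  proof -
    consider "i < j" | "i = j" | "j < i" by linarith
    then show ?thesis
    proof cases
      case 1 then show ?thesis using succ_succ that by (simp add: Sx_def)
    next
      case 2 then show ?thesis by simp
    next
      case 3 then have "\<not> E (P!Suc j) (P!Suc i)" using succ_succ that by (simp add: Sx_def)
      then show ?thesis using esym by blast
    qed
  qed
  show "\<not> E x y" using xy sh ss by (auto simp: X_def)
qed

lemma indepY: "indep E Y"
  unfolding indep_def
proof (intro ballI)
  fix x y assume xy: "x \<in> Y" "y \<in> Y"
  have sh: "\<not> E (P!(i - 1)) h \<and> \<not> E h (P!(i - 1))" if "i \<in> Sy" for i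
  proof -
    have i: "i \<in> Nh" "0 < i" "i < length P" using that by (auto simp: Sy_def Nh_def)
    have "\<not> E (P!(i - 1)) h"
    proof
      assume "E (P!(i - 1)) h"
      then have "i - 1 \<in> Nh" using i by (simp add: Nh_def)
      then show False using b1[of "i - 1"] i by (simp add: Nh_def)
    qed
    then show ?thesis using esym by blast
  qed
  have ss: "\<not> E (P!(i - 1)) (P!(j - 1))" if "i \<in> Sy" "j \<in> Sy" for i j
  proof -
    consider "i < j" | "i = j" | "j < i" by linarith
    then show ?thesis
    proof cases
      case 1 then show ?thesis using pred_pred that by (simp add: Sy_def)
    next
      case 2 then show ?thesis by simp
    next
      case 3 then have "\<not> E (P!(j - 1)) (P!(i - 1))" using pred_pred that by (simp add: Sy_def)
      then show ?thesis using esym by blast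
    qed
  qed
  show "\<not> E x y" using xy sh ss by (auto simp: Y_def)
qed

end

context lph
begin

lemma pair:
  assumes tL: "Suc t < length P" shows "\<not> (P!t \<in> nb X \<and> P!Suc t \<in> nb Y)"
proof
  assume a: "P!t \<in> nb X \<and> P!Suc t \<in> nb Y"
  define p where "p = P!t"
  define q where "q = P!Suc t"
  obtain w where w: "w \<in> X" "E p w" using a by (auto simp: nb_def p_def)
  obtain w' where w': "w' \<in> Y" "E q w'" using a by (auto simp: nb_def q_def)
  have Mp: "card {x\<in>X. \<not> E p x} < k" by (rule F1[OF XV indepX w])
  have Mq: "card {x\<in>Y. \<not> E q x} < k" by (rule F1[OF YV indepY w'])
  define SM where "SM = {e \<in> Nh. Suc e < length P \<and> \<not> E p (P!Suc e)}"
  define PM where "PM = {f \<in> Nh. 0 < f \<and> \<not> E q (P!(f - 1))}"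
  have fX: "finite X" using XV finV finite_subset by blast
  have fY: "finite Y" using YV finV finite_subset by blast
  have imSM: "card ((\<lambda>i. P!Suc i) ` SM) = card SM"
    by (rule card_image, rule inj_on_subset[OF inj_succ]) (auto simp: SM_def)
  have imPM: "card ((\<lambda>i. P!(i - 1)) ` PM) = card PM"
    by (rule card_image, rule inj_on_subset[OF inj_pred]) (auto simp: PM_def Nh_def)
  have subSM: "(\<lambda>i. P!Suc i) ` SM \<subseteq> {x\<in>X. \<not> E p x}" by (auto simp: SM_def X_def Sx_def)
  have subPM: "(\<lambda>i. P!(i - 1)) ` PM \<subseteq> {x\<in>Y. \<not> E q x}" by (auto simp: PM_def Y_def Sy_def)
  have hSM: "h \<notin> (\<lambda>i. P!Suc i) ` SM" using hX by (auto simp: SM_def Sx_def)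
  have hPM: "h \<notin> (\<lambda>i. P!(i - 1)) ` PM" using hY by (auto simp: PM_def Sy_def)
  have cSM: "card SM + (if E p h then 0 else 1) < k"
  proof (cases "E p h")
    case True
    have "card SM \<le> card {x\<in>X. \<not> E p x}" using card_mono[OF _ subSM] fX imSM by simp
    then show ?thesis using Mp True by simp
  next
    case False
    have "insert h ((\<lambda>i. P!Suc i) ` SM) \<subseteq> {x\<in>X. \<not> E p x}" using subSM False by (auto simp: X_def)
    then have "card (insert h ((\<lambda>i. P!Suc i) ` SM)) \<le> card {x\<in>X. \<not> E p x}" using fX by (intro card_mono) auto
    moreover have "finite ((\<lambda>i. P!Suc i) ` SM)" using finNh by (simp add: SM_def)
    ultimately show ?thesis using Mp False hSM imSM by simp
  qed
  have cPM: "card PM + (if E q h then 0 else 1) < k"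
  proof (cases "E q h")
    case True
    have "card PM \<le> card {x\<in>Y. \<not> E q x}" using card_mono[OF _ subPM] fY imPM by simp
    then show ?thesis using Mq True by simp
  next
    case False
    have "insert h ((\<lambda>i. P!(i - 1)) ` PM) \<subseteq> {x\<in>Y. \<not> E q x}" using subPM False by (auto simp: Y_def)
    then have "card (insert h ((\<lambda>i. P!(i - 1)) ` PM)) \<le> card {x\<in>Y. \<not> E q x}" using fY by (intro card_mono) auto
    moreover have "finite ((\<lambda>i. P!(i - 1)) ` PM)" using finNh by (simp add: PM_def)
    ultimately show ?thesis using Mq False hPM imPM by simp
  qed
  have nboth: "\<not> (E p h \<and> E q h)"
  proof
    assume "E p h \<and> E q h"
    then have "t \<in> Nh" "E q h" using tL by (auto simp: Nh_def p_def)
    then show False using b1 tL by (simp add: q_def)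
  qed
  have sum: "card SM + card PM + 3 \<le> 2 * k" using cSM cPM nboth by (auto split: if_splits)
  define D1 where "D1 = {e \<in> Nh. e \<le> t}"
  define D2 where "D2 = {e \<in> Nh. t < e}"
  have notSuc: "f \<noteq> Suc e" if "e \<in> Nh" "f \<in> Nh" "e < f" for e f
  proof
    assume "f = Suc e"
    then show False using b1[OF that(1)] that(2) by (simp add: Nh_def)
  qed
  have pD1: "\<forall>e\<in>D1. \<forall>f\<in>D1. e < f \<longrightarrow> e \<in> SM \<or> f \<in> PM"
  proof (intro ballI impI, rule ccontr)
    fix e f assume ef: "e \<in> D1" "f \<in> D1" "e < f" "\<not> (e \<in> SM \<or> f \<in> PM)"
    have eN: "e \<in> Nh" "f \<in> Nh" "f \<le> t" using ef by (auto simp: D1_def)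
    have e1: "E p (P!Suc e)" using ef eN tL by (auto simp: SM_def)
    have e2: "E q (P!(f - 1))" using ef eN by (auto simp: PM_def)
    have se: "Suc e < f" using notSuc[OF eN(1,2) ef(3)] ef(3) by simp
    have "E (P!e) h" "E h (P!f)" using eN esym by (auto simp: Nh_def)
    moreover have "E (P!(f - 1)) (P!Suc t)" using esym[OF e2] by (simp add: q_def)
    ultimately show False using patB[OF okh se eN(3) tL] e1 by (simp add: p_def)
  qed
  have pD2: "\<forall>e\<in>D2. \<forall>f\<in>D2. e < f \<longrightarrow> e \<in> SM \<or> f \<in> PM"
  proof (intro ballI impI, rule ccontr)
    fix e f assume ef: "e \<in> D2" "f \<in> D2" "e < f" "\<not> (e \<in> SM \<or> f \<in> PM)"
    have eN: "e \<in> Nh" "f \<in> Nh" "t < e" "f < length P" using ef by (auto simp: D2_def Nh_def)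
    have e1: "E p (P!Suc e)" using ef eN by (auto simp: SM_def)
    have e2: "E q (P!(f - 1))" using ef eN by (auto simp: PM_def)
    have se: "Suc e < f" using notSuc[OF eN(1,2) ef(3)] ef(3) by simp
    have "E (P!e) h" "E h (P!f)" using eN esym by (auto simp: Nh_def)
    moreover have "E (P!(f - 1)) (P!Suc t)" using esym[OF e2] by (simp add: q_def)
    ultimately show False using patB'[OF okh eN(3) se eN(4)] e1 by (simp add: p_def)
  qed
  have fD1: "finite D1" and fD2: "finite D2" using finNh by (auto simp: D1_def D2_def)
  have c1: "card D1 \<le> card (D1 \<inter> SM) + card (D1 \<inter> PM) + 1" by (rule card_split_min[OF fD1 pD1])
  have c2: "card D2 \<le> card (D2 \<inter> SM) + card (D2 \<inter> PM) + 1" by (rule card_split_min[OF fD2 pD2])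
  have NhU: "Nh = D1 \<union> D2" and dj: "D1 \<inter> D2 = {}" by (auto simp: D1_def D2_def)
  have "card Nh = card D1 + card D2" using NhU dj fD1 fD2 card_Un_disjoint by metis
  moreover have "card (D1 \<inter> SM) + card (D2 \<inter> SM) = card SM"
  proof -
    have "SM = (D1 \<inter> SM) \<union> (D2 \<inter> SM)" using NhU by (auto simp: SM_def)
    moreover have "(D1 \<inter> SM) \<inter> (D2 \<inter> SM) = {}" using dj by auto
    ultimately show ?thesis using fD1 fD2 card_Un_disjoint[of "D1 \<inter> SM" "D2 \<inter> SM"] by simp
  qed
  moreover have "card (D1 \<inter> PM) + card (D2 \<inter> PM) = card PM"
  proof -
    have "PM = (D1 \<inter> PM) \<union> (D2 \<inter> PM)" using NhU by (auto simp: PM_def)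
    moreover have "(D1 \<inter> PM) \<inter> (D2 \<inter> PM) = {}" using dj by auto
    ultimately show ?thesis using fD1 fD2 card_Un_disjoint[of "D1 \<inter> PM" "D2 \<inter> PM"] by simp
  qed
  ultimately have "card Nh \<le> card SM + card PM + 2" using c1 c2 by linarith
  then show False using sum cNh by linarith
qed

end

context lph
begin

definition "good t \<longleftrightarrow> P!t \<in> nb X \<and> P!t \<in> nb Y"

lemma XF2: "u \<notin> nb X \<Longrightarrow> v \<notin> nb X \<Longrightarrow> \<not> E u v"
  by (rule F2[OF XV indepX]) (use cX in auto)
lemma YF2: "u \<notin> nb Y \<Longrightarrow> v \<notin> nb Y \<Longrightarrow> \<not> E u v"
  by (rule F2[OF YV indepY]) (use cY in auto)

lemma up: assumes "good t" "Suc (Suc t) < length P" shows "good (Suc (Suc t))"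
proof -
  have l: "Suc t < length P" using assms(2) by simp
  have a1: "P!Suc t \<notin> nb Y" using pair[OF l] assms(1) by (auto simp: good_def)
  have a2: "P!Suc (Suc t) \<in> nb Y" using YF2[OF a1] Pedge[OF assms(2)] by blast
  have a3: "P!Suc t \<notin> nb X" using pair[OF assms(2)] a2 by blast
  have a4: "P!Suc (Suc t) \<in> nb X" using XF2[OF a3] Pedge[OF assms(2)] by blast
  show ?thesis using a2 a4 by (simp add: good_def)
qed

lemma down: assumes "good t" "2 \<le> t" "t < length P" shows "good (t - 2)"
proof -
  have i1: "Suc (t - 1) = t" and i2: "Suc (t - 2) = t - 1" using assms(2) by auto
  have l1: "Suc (t - 1) < length P" and l2: "Suc (t - 2) < length P" using assms by auto
  have a1: "P!(t - 1) \<notin> nb X" using pair[OF l1] assms(1) i1 by (auto simp: good_def)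
  have e: "E (P!(t - 2)) (P!(t - 1))" using Pedge[OF l2] i2 by simp
  have a2: "P!(t - 2) \<in> nb X" using XF2[OF _ a1] e by blast
  have a3: "P!(t - 1) \<notin> nb Y" using pair[OF l2] a2 i2 by auto
  have a4: "P!(t - 2) \<in> nb Y" using YF2[OF _ a3] e by blast
  show ?thesis using a2 a4 by (simp add: good_def)
qed

lemma Nh_ne: "Nh \<noteq> {}" using cNh k2 by auto

definition "e0 = Min Nh"

lemma e0N: "e0 \<in> Nh" unfolding e0_def using finNh Nh_ne by (rule Min_in)

lemma good_e0: "good e0"
proof -
  have "E (P!e0) h" using e0N by (simp add: Nh_def)
  moreover have "h \<in> X" "h \<in> Y" by (auto simp: X_def Y_def)
  ultimately show ?thesis by (auto simp: good_def nb_def)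
qed

lemma good_up_all: "e0 + 2 * d < length P \<Longrightarrow> good (e0 + 2 * d)"
proof (induction d)
  case 0 then show ?case using good_e0 by simp
next
  case (Suc d)
  then have "good (e0 + 2 * d)" by simp
  from up[OF this] Suc.prems show ?case by (simp add: algebra_simps)
qed

lemma good_down_all: "2 * d \<le> e0 \<Longrightarrow> good (e0 - 2 * d)"
proof (induction d)
  case 0 then show ?case using good_e0 by simp
next
  case (Suc d)
  then have g: "good (e0 - 2 * d)" by simp
  have "e0 < length P" using e0N by (simp add: Nh_def)
  then have "good (e0 - 2 * d - 2)" using down[OF g] Suc.prems by simp
  then show ?case by (simp add: algebra_simps)
qed

lemma good_all: assumes "t < length P" "t mod 2 = e0 mod 2" shows "good t"
proof (cases "e0 \<le> t")
  case True
  have d: "2 dvd (t - e0)" using mod_eq_dvd_iff_nat[OF True] assms(2) by simp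
  then have "t - e0 = 2 * ((t - e0) div 2)" by simp
  then have "t = e0 + 2 * ((t - e0) div 2)" using True by linarith
  then show ?thesis using good_up_all[of "(t - e0) div 2"] assms(1) by simp
next
  case False
  have le: "t \<le> e0" using False by simp
  have d: "2 dvd (e0 - t)" using mod_eq_dvd_iff_nat[OF le] assms(2)[symmetric] by simp
  then have "e0 - t = 2 * ((e0 - t) div 2)" by simp
  then have eq: "e0 - 2 * ((e0 - t) div 2) = t" and "2 * ((e0 - t) div 2) \<le> e0" using le by linarith+
  then show ?thesis using good_down_all[of "(e0 - t) div 2"] eq by simp
qed

lemma notX: assumes "Suc i < length P" "i mod 2 \<noteq> e0 mod 2" shows "P!i \<notin> nb X"
proof -
  have "Suc i mod 2 = e0 mod 2" using assms(2) by presburger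
  then have "good (Suc i)" using good_all assms(1) by blast
  then show ?thesis using pair[OF assms(1)] by (auto simp: good_def)
qed

lemma notY: assumes "0 < i" "i < length P" "i mod 2 \<noteq> e0 mod 2" shows "P!i \<notin> nb Y"
proof -
  obtain j where j: "i = Suc j" using assms(1) by (cases i) auto
  have "j mod 2 = e0 mod 2" using assms(3) j by presburger
  moreover have "j < length P" using assms(2) j by simp
  ultimately have "good j" by (rule good_all[rotated])
  then have "P!j \<in> nb X" by (simp add: good_def)
  moreover have "Suc j < length P" using assms(2) j by simp
  ultimately show ?thesis using pair[of j] j by blast
qed

lemma struct1: assumes "i < length P" "E (P!i) h" shows "i mod 2 = e0 mod 2"
proof (rule ccontr)
  assume n: "i mod 2 \<noteq> e0 mod 2"
  have hX': "h \<in> X" "h \<in> Y" by (auto simp: X_def Y_def)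
  show False
  proof (cases "Suc i < length P")
    case True
    then show False using notX[OF True n] assms(2) hX' by (auto simp: nb_def)
  next
    case False
    then have "0 < i" using assms(1) PL by auto
    then show False using notY[OF _ assms(1) n] assms(2) hX' by (auto simp: nb_def)
  qed
qed

lemma struct2:
  assumes "Suc i < length P" "Suc j < length P" "i mod 2 \<noteq> e0 mod 2" "j mod 2 \<noteq> e0 mod 2"
  shows "\<not> E (P!i) (P!j)"
  using XF2[OF notX[OF assms(1,3)] notX[OF assms(2,4)]] .

lemma struct:
  "\<exists>c. (\<forall>i<length P. E (P!i) h \<longrightarrow> i mod 2 = c) \<and>
       (\<forall>i j. Suc i < length P \<longrightarrow> Suc j < length P \<longrightarrow> i mod 2 \<noteq> c \<longrightarrow> j mod 2 \<noteq> c \<longrightarrow> \<not> E (P!i) (P!j))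
       \<and> 2 * k \<le> card {i. i < length P \<and> E (P!i) h}"
proof (intro exI conjI allI impI)
  show "i mod 2 = e0 mod 2" if "i < length P" "E (P!i) h" for i using struct1 that .
  show "\<not> E (P!i) (P!j)" if "Suc i < length P" "Suc j < length P" "i mod 2 \<noteq> e0 mod 2" "j mod 2 \<noteq> e0 mod 2" for i j
    using struct2 that .
  show "2 * k \<le> card {i. i < length P \<and> E (P!i) h}" using cNh by (simp add: Nh_def)
qed

end

lemma card_par_le: "card {i. i < L \<and> i mod 2 = (c::nat)} \<le> (L + 1) div 2"
proof -
  have "card {i. i < L \<and> i mod 2 = c} \<le> card {..< (L + 1) div 2}"
  proof (rule card_inj_on_le)
    show "inj_on (\<lambda>i. i div 2) {i. i < L \<and> i mod 2 = c}"
    proof (rule inj_onI)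
      fix x y assume "x \<in> {i. i < L \<and> i mod 2 = c}" "y \<in> {i. i < L \<and> i mod 2 = c}" "x div 2 = y div 2"
      then have "x mod 2 = y mod 2" "x div 2 = y div 2" by auto
      then show "x = y" using div_mult_mod_eq[of x 2] div_mult_mod_eq[of y 2] by linarith
    qed
    show "(\<lambda>i. i div 2) ` {i. i < L \<and> i mod 2 = c} \<subseteq> {..<(L + 1) div 2}"
    proof
      fix x assume "x \<in> (\<lambda>i. i div 2) ` {i. i < L \<and> i mod 2 = c}"
      then obtain i where "i < L" "x = i div 2" by auto
      then show "x \<in> {..<(L + 1) div 2}" by simp
    qed
  qed simp
  then show ?thesis by simp
qed

lemma cardA1: "card {i. Suc i < L \<and> i mod 2 \<noteq> (1::nat)} = L div 2"
proof -
  have "{i. Suc i < L \<and> i mod 2 \<noteq> (1::nat)} = (\<lambda>j. 2 * j) ` {..< L div 2}"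
  proof (intro set_eqI iffI)
    fix x assume "x \<in> {i. Suc i < L \<and> i mod 2 \<noteq> (1::nat)}"
    then have a: "Suc x < L" "x mod 2 \<noteq> 1" by auto
    from a have "x = 2 * (x div 2)" by presburger
    moreover from a have "x div 2 < L div 2" by presburger
    ultimately show "x \<in> (\<lambda>j. 2 * j) ` {..< L div 2}" by blast
  next
    fix x assume "x \<in> (\<lambda>j. 2 * j) ` {..< L div 2}"
    then obtain j where "j < L div 2" "x = 2 * j" by auto
    then show "x \<in> {i. Suc i < L \<and> i mod 2 \<noteq> (1::nat)}" by simp
  qed
  moreover have "inj_on (\<lambda>j. 2 * j) {..< L div 2}" by (auto simp: inj_on_def)
  ultimately show ?thesis by (simp add: card_image)
qed

lemma cardA0: "card {i. Suc i < L \<and> i mod 2 \<noteq> (0::nat)} = (L - 1) div 2"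
proof -
  have "{i. Suc i < L \<and> i mod 2 \<noteq> (0::nat)} = (\<lambda>j. 2 * j + 1) ` {..< (L - 1) div 2}"
  proof (intro set_eqI iffI)
    fix x assume "x \<in> {i. Suc i < L \<and> i mod 2 \<noteq> (0::nat)}"
    then have a: "Suc x < L" "x mod 2 \<noteq> 0" by auto
    from a have "x = 2 * (x div 2) + 1" by presburger
    moreover from a have "x div 2 < (L - 1) div 2" by presburger
    ultimately show "x \<in> (\<lambda>j. 2 * j + 1) ` {..< (L - 1) div 2}" by blast
  next
    fix x assume "x \<in> (\<lambda>j. 2 * j + 1) ` {..< (L - 1) div 2}"
    then obtain j where "j < (L - 1) div 2" "x = 2 * j + 1" by auto
    then show "x \<in> {i. Suc i < L \<and> i mod 2 \<noteq> (0::nat)}" by simp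
  qed
  moreover have "inj_on (\<lambda>j. 2 * j + 1) {..< (L - 1) div 2}" by (auto simp: inj_on_def)
  ultimately show ?thesis by (simp add: card_image)
qed

context lp
begin

lemma struct_lp:
  assumes "y \<in> V" "y \<notin> set P"
  shows "\<exists>c. (\<forall>i<length P. E (P!i) y \<longrightarrow> i mod 2 = c) \<and>
       (\<forall>i j. Suc i < length P \<longrightarrow> Suc j < length P \<longrightarrow> i mod 2 \<noteq> c \<longrightarrow> j mod 2 \<noteq> c \<longrightarrow> \<not> E (P!i) (P!j))
       \<and> 2 * k \<le> card {i. i < length P \<and> E (P!i) y}"
proof -
  interpret lph V E k P y by unfold_locales (use assms in auto)
  show ?thesis by (rule struct)
qed

end

context lp
begin

lemma on_path: "V \<subseteq> set P"
proof (rule ccontr)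
  assume "\<not> V \<subseteq> set P"
  then obtain h0 where h0: "h0 \<in> V" "h0 \<notin> set P" by auto
  define L where "L = length P"
  define Q where "Q c = {y \<in> V - set P. \<forall>i<L. E (P!i) y \<longrightarrow> i mod 2 = c}" for c :: nat
  have cls: "\<exists>c<2. y \<in> Q c \<and> (\<forall>i j. Suc i < L \<longrightarrow> Suc j < L \<longrightarrow> i mod 2 \<noteq> c \<longrightarrow> j mod 2 \<noteq> c \<longrightarrow> \<not> E (P!i) (P!j))
      \<and> 2 * k \<le> card {i. i < L \<and> E (P!i) y}" if y: "y \<in> V" "y \<notin> set P" for y
  proof -
    obtain c where c: "\<forall>i<L. E (P!i) y \<longrightarrow> i mod 2 = c"
      "\<forall>i j. Suc i < L \<longrightarrow> Suc j < L \<longrightarrow> i mod 2 \<noteq> c \<longrightarrow> j mod 2 \<noteq> c \<longrightarrow> \<not> E (P!i) (P!j)"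
      "2 * k \<le> card {i. i < L \<and> E (P!i) y}"
      using struct_lp[OF y] unfolding L_def by blast
    have "{i. i < L \<and> E (P!i) y} \<noteq> {}" using c(3) k2 by (intro notI) simp
    then obtain i where "i < L" "E (P!i) y" by auto
    then have "c < 2" using c(1) by auto
    moreover have "y \<in> Q c" using c(1) y by (simp add: Q_def)
    ultimately show ?thesis using c by blast
  qed
  have nonemp: "\<exists>i<L. E (P!i) y" if yy: "y \<in> V" "y \<notin> set P" for y
  proof -
    have "2 * k \<le> card {i. i < L \<and> E (P!i) y}" using cls[OF yy] by blast
    then have "{i. i < L \<and> E (P!i) y} \<noteq> {}" using k2 by (intro notI) simp
    then show ?thesis by auto
  qed
  have Qsub: "Q c \<subseteq> V - set P" for c by (auto simp: Q_def)
  have cover: "V - set P = Q 0 \<union> Q 1"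
  proof
    show "V - set P \<subseteq> Q 0 \<union> Q 1"
    proof
      fix y assume "y \<in> V - set P"
      then obtain c where "c < 2" "y \<in> Q c" using cls by blast
      then show "y \<in> Q 0 \<union> Q 1" by (cases c) auto
    qed
  qed (use Qsub in auto)
  have disj: "Q 0 \<inter> Q 1 = {}"
  proof (rule ccontr)
    assume "Q 0 \<inter> Q 1 \<noteq> {}"
    then obtain y where y: "y \<in> Q 0" "y \<in> Q 1" by auto
    then obtain i where "i < L" "E (P!i) y" using nonemp Qsub by blast
    then show False using y by (auto simp: Q_def)
  qed
  have L4: "4 \<le> L"
  proof -
    have "2 * k \<le> card {i. i < L \<and> E (P!i) h0}" using cls[OF h0] by blast
    moreover have "card {i. i < L \<and> E (P!i) h0} \<le> card {..<L}" by (intro card_mono) auto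
    ultimately show ?thesis using k2 by simp
  qed
  have fV: "finite V" by (rule finV)
  have fQ: "finite (Q c)" for c using Qsub fV finite_subset by (metis Diff_subset subset_trans)
  have cardV: "card V = L + card (Q 0) + card (Q 1)"
  proof -
    have "V = set P \<union> (Q 0 \<union> Q 1)" using cover PV by auto
    moreover have "set P \<inter> (Q 0 \<union> Q 1) = {}" using Qsub by auto
    ultimately have "card V = card (set P) + card (Q 0 \<union> Q 1)" using fQ by (simp add: card_Un_disjoint)
    also have "card (Q 0 \<union> Q 1) = card (Q 0) + card (Q 1)" using fQ disj by (simp add: card_Un_disjoint)
    also have "card (set P) = L" using Pd by (simp add: L_def distinct_card)
    finally show ?thesis by simp
  qed
  define A where "A c = {i. Suc i < L \<and> i mod 2 \<noteq> c}" for c :: nat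
  define R where "R c = (\<lambda>i. P!i) ` A c \<union> Q c" for c
  have cA0: "card (A 0) = (L - 1) div 2" unfolding A_def by (rule cardA0)
  have cA1: "card (A 1) = L div 2" unfolding A_def by (rule cardA1)
  have key: "3 * (card (A c) + card (Q c)) \<le> card V" if c2: "c < 2" and ne: "Q c \<noteq> {}" for c
  proof -
    obtain y where yQ: "y \<in> Q c" using ne by auto
    then have y: "y \<in> V" "y \<notin> set P" using Qsub by auto
    obtain c' where c': "c' < 2" "y \<in> Q c'"
      "\<forall>i j. Suc i < L \<longrightarrow> Suc j < L \<longrightarrow> i mod 2 \<noteq> c' \<longrightarrow> j mod 2 \<noteq> c' \<longrightarrow> \<not> E (P!i) (P!j)"
      using cls[OF y] by blast
    obtain i where i: "i < L" "E (P!i) y" using nonemp[OF y] by blast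
    have "c' = c" using i yQ c'(2) by (auto simp: Q_def)
    then have st: "\<forall>i j. Suc i < L \<longrightarrow> Suc j < L \<longrightarrow> i mod 2 \<noteq> c \<longrightarrow> j mod 2 \<noteq> c \<longrightarrow> \<not> E (P!i) (P!j)"
      using c'(3) by simp
    have fA: "finite (A c)" by (rule finite_subset[of _ "{..<L}"]) (auto simp: A_def)
    have RV: "R c \<subseteq> V" using PnthV Qsub by (auto simp: R_def A_def L_def)
    have ind: "\<forall>x\<in>R c. \<forall>x'\<in>R c. \<not> E x x'"
    proof (intro ballI)
      fix x x' assume xR: "x \<in> R c" "x' \<in> R c"
      have PQ: "\<not> E (P!j) z" if "j \<in> A c" "z \<in> Q c" for j z
        using that by (auto simp: A_def Q_def)
      show "\<not> E x x'"
      proof (cases "x \<in> Q c")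
        case xQ: True
        show ?thesis
        proof (cases "x' \<in> Q c")
          case True
          then show ?thesis using xQ Qsub offpath_noedge by blast
        next
          case False
          then obtain j where "j \<in> A c" "x' = P!j" using xR(2) by (auto simp: R_def)
          then have "\<not> E x' x" using PQ xQ by simp
          then show ?thesis using esym by blast
        qed
      next
        case xnQ: False
        then obtain j where j: "j \<in> A c" "x = P!j" using xR(1) by (auto simp: R_def)
        show ?thesis
        proof (cases "x' \<in> Q c")
          case True
          then show ?thesis using PQ j by simp
        next
          case False
          then obtain j' where "j' \<in> A c" "x' = P!j'" using xR(2) by (auto simp: R_def)
          then show ?thesis using st j by (auto simp: A_def)
        qed
      qed
    qed
    have cR: "card (R c) = card (A c) + card (Q c)"
    proof -
      have "card ((\<lambda>i. P!i) ` A c) = card (A c)"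
        by (rule card_image, rule inj_on_subset[OF inj_nth]) (auto simp: A_def L_def)
      moreover have "(\<lambda>i. P!i) ` A c \<inter> Q c = {}"
      proof -
        have "(\<lambda>i. P!i) ` A c \<subseteq> set P" by (auto simp: A_def L_def)
        then show ?thesis using Qsub[of c] by blast
      qed
      ultimately show ?thesis using fA fQ by (simp add: R_def card_Un_disjoint)
    qed
    have eqR: "V - (V - R c) = R c" using RV by auto
    have "num_components V E (V - R c) = card (R c)"
      unfolding num_components_def eqR by (rule comp_indep[OF RV ind])
    moreover have "2 \<le> card (R c)"
    proof -
      have "1 \<le> card (A c)" using c2 cA0 cA1 L4 by (cases c) auto
      moreover have "1 \<le> card (Q c)" using ne fQ by (simp add: Suc_le_eq card_gt_0_iff)
      ultimately show ?thesis using cR by simp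
    qed
    ultimately have "k * card (R c) \<le> card (V - R c)"
      using tough_cut[of "V - R c"] by auto
    also have "card (V - R c) = card V - card (R c)" using RV fV by (simp add: card_Diff_subset finite_subset)
    finally have "k * card (R c) + card (R c) \<le> card V" using card_mono[OF fV RV] by simp
    moreover have "3 * card (R c) \<le> k * card (R c) + card (R c)" using k2 by simp
    ultimately show ?thesis using cR by simp
  qed
  have hQ: "Q 0 \<noteq> {} \<or> Q 1 \<noteq> {}" using h0 cover by auto
  have dv1: "L \<le> 2 * (L div 2) + 1" using div_mult_mod_eq[of L 2] mod_less_divisor[of 2 L] by linarith
  have dv0: "L \<le> 2 * ((L - 1) div 2) + 2"
    using div_mult_mod_eq[of "L - 1" 2] mod_less_divisor[of 2 "L - 1"] L4 by linarith
  show False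
  proof (cases "Q 0 = {}")
    case True
    then have q1: "Q 1 \<noteq> {}" using hQ by simp
    have "3 * (L div 2 + card (Q 1)) \<le> L + card (Q 1)" using key[OF _ q1] cA1 cardV True by simp
    then have h: "3 * (L div 2) + 2 * card (Q 1) \<le> L" unfolding distrib_left by linarith
    moreover have "1 \<le> card (Q 1)" using q1 fQ by (simp add: Suc_le_eq card_gt_0_iff)
    ultimately show False using dv1 by linarith
  next
    case False
    have k0: "3 * ((L - 1) div 2 + card (Q 0)) \<le> L + card (Q 0) + card (Q 1)" using key[OF _ False] cA0 cardV by simp
    then have h0: "3 * ((L - 1) div 2) + 2 * card (Q 0) \<le> L + card (Q 1)" unfolding distrib_left by linarith
    have q0: "1 \<le> card (Q 0)" using False fQ by (simp add: Suc_le_eq card_gt_0_iff)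
    show False
    proof (cases "Q 1 = {}")
      case True
      then show False using h0 q0 L4 dv0 by simp
    next
      case F1: False
      have "3 * (L div 2 + card (Q 1)) \<le> L + card (Q 0) + card (Q 1)" using key[OF _ F1] cA1 cardV by simp
      then have h1: "3 * (L div 2) + 2 * card (Q 1) \<le> L + card (Q 0)" unfolding distrib_left by linarith
      show False using h0 h1 q0 L4 dv0 dv1 by linarith
    qed
  qed
qed

end

context tg
begin

lemma connected: assumes "a \<in> V" "b \<in> V" shows "(restr E V)\<^sup>*\<^sup>* a b"
proof (rule ccontr)
  assume n: "\<not> (restr E V)\<^sup>*\<^sup>* a b"
  have "2 \<le> card (components (V - {}) E)" using comp2[of V a b] n assms by simp
  then have c: "2 \<le> num_components V E {}" by (simp add: num_components_def)
  have "k * num_components V E {} \<le> card {}" using tough_cut[of "{}"] c by simp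
  then show False using c k2 by simp
qed

lemma ham: assumes ab: "a \<in> V" "b \<in> V" "a \<noteq> b" shows "\<exists>p. ham_path V E a b p"
proof -
  define PP where "PP p \<longleftrightarrow> distinct p \<and> set p \<subseteq> V \<and> walk E p \<and> p \<noteq> [] \<and> hd p = a \<and> last p = b" for p
  obtain xs where xs: "xs \<noteq> []" "hd xs = a" "last xs = b" "distinct xs" "walk E xs" "set xs \<subseteq> V"
    using walk_to_path[OF connected[OF ab(1,2)] ab(1)] by blast
  have "PP xs" using xs by (simp add: PP_def)
  moreover have "\<forall>p. PP p \<longrightarrow> length p < card V + 1"
  proof (intro allI impI)
    fix p assume "PP p"
    then have "length p = card (set p)" using distinct_card[of p] by (simp add: PP_def)
    moreover have "card (set p) \<le> card V" using \<open>PP p\<close> finV by (intro card_mono) (auto simp: PP_def)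
    ultimately show "length p < card V + 1" by simp
  qed
  ultimately obtain P where P: "PP P" and mx: "\<forall>p. PP p \<longrightarrow> length p \<le> length P"
    using ex_has_greatest_nat[of PP xs length "card V + 1"] by blast
  have P2: "2 \<le> length P"
  proof (rule ccontr)
    assume "\<not> 2 \<le> length P"
    moreover have "P \<noteq> []" using P by (simp add: PP_def)
    ultimately obtain x where "P = [x]" by (cases P) (auto simp: Suc_le_eq)
    then show False using P ab(3) by (auto simp: PP_def)
  qed
  interpret lp V E k P
  proof unfold_locales
    show "distinct P" "set P \<subseteq> V" "walk E P" "2 \<le> length P" using P P2 by (auto simp: PP_def)
    show "length Q \<le> length P" if "distinct Q" "set Q \<subseteq> V" "walk E Q" "Q \<noteq> []" "hd Q = hd P" "last Q = last P" for Q
      using mx that P by (auto simp: PP_def)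
  qed
  have "set P = V" using on_path PV by auto
  then show ?thesis using P unfolding ham_path_def PP_def walk_def by blast
qed

end

theorem mainTheorem2:
  fixes V :: "'a set" and E :: "'a \<Rightarrow> 'a \<Rightarrow> bool" and k :: nat
  assumes "graph V E"
    and "k \<ge> 2"
    and "toughness V E \<ge> ereal (real k)"
    and "H_free (P2_kP1_verts k) P2_kP1_edge V E"
  shows "hamiltonian_connected V E"
proof -
  interpret tg V E k using assms by unfold_locales auto
  show ?thesis unfolding hamiltonian_connected_def using ham by blast
qed

end
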